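(* Let $T$ be an argumentation theory, $G(T)$ its full grounding, and $G_{DL}(T)$ its grounding via the Datalog program $P_T$ of Transformation 1 (as in the context). Then for every semantics $\mathsf{sem}\in\{\text{complete},\text{grounded},\text{preferred},\text{stable}\}$, $$\mathsf{sem}(T)=\mathsf{sem}(G(T))=\mathsf{sem}(G_{DL}(T)),$$ where $\mathsf{sem}(G)$ denotes the set of $\mathsf{sem}$-extensions of the abstract argumentation framework $(\mathrm{Args}(G),\mathrm{Att}(G))$ and $\mathsf{sem}(T)$ is defined as $\mathsf{sem}(G(T))$.
   Context: Work over a function-free first-order signature (predicates and constants); atoms are $p(t_1,\dots,t_k)$ with each $t_i$ a constant or variable. An argumentation theory is $T=(K_n,K_p,R_s,R_d,C,\mathsf{n})$ where: $K_n$ (axioms) and $K_p$ (ordinary premises) are finite sets of ground atoms; $R_s$ (strict rules) is a finite set of rules $b_1(\vec X_1),\dots,b_m(\vec X_m)\to h(\vec Y)$ and $R_d$ (defeasible rules) a finite set of rules $b_1(\vec X_1),\dots,b_m(\vec X_m)\Rightarrow h(\vec Y)$, where every variable of the head occurs in the body; each $r\in R_d$ carries a name atom $\mathsf{n}(r)=\nu_r(\vec Z)$ whose variables occur in the body of $r$; $C$ is a finite set of contrariness rules $c: s(\vec X)\rightsquigarrow S(\vec X)$, where $s(\vec X)$ is an atom and $S(\vec X)$ a finite set of atoms whose variables occur in $\vec X$. The Herbrand universe $HU(T)$ is the set of constants occurring in $T$; a ground substitution maps variables to $HU(T)$, and for a rule or contrariness rule $x$ and ground substitution $\sigma$, $x\sigma$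 is its ground instance (with $\mathsf{n}(r\sigma)=\mathsf{n}(r)\sigma$). The full grounding $G(T)$ has the same $K_n,K_p$, and as rules and contrariness rules all ground instances $x\sigma$ of those of $T$. For a ground theory $G$ with premises $K_n\cup K_p$, rules $R$ and contrariness rules $C'$: arguments are defined inductively: each $k\in K_n\cup K_p$ is an argument with conclusion $\mathrm{conc}=k$, premises $\mathrm{Prem}=\{k\}$, no rules; if $A_1,\dots,A_m$ are arguments and $r\in R$ is a ground rule with body $\mathrm{conc}(A_1),\dots,\mathrm{conc}(A_m)$ and head $h$, then $A=\langle A_1,\dots,A_m\to h\rangle$ is an argument with $\mathrm{conc}(A)=h$, top rule $\mathrm{top}(A)=r$, $\mathrm{Prem}(A)=\bigcup_i\mathrm{Prem}(A_i)$, $\mathrm{Rules}(A)=\{r\}\cup\bigcup_i\mathrm{Rules}(A_i)$, and subarguments $\mathrm{Sub}(A)=\{A\}\cup\bigcup_i\mathrm{Sub}(A_i)$. The weak points of $A$ are $\mathrm{wp}(A)=(\mathrm{Prem}(A)\cap K_p)\cup\bigcup_{r\in\mathrm{Rules}(A)\cap R_d}\{\mathrm{head}(r),\mathsf{n}(r)\}$. Argument $A$ attacks $A'$ iff there is a ground contrariness rule $s\rightsquigarrow S$ in $C'$ with $s\in\mathrm{wp}(A')$ and $\mathrm{conc}(A)\in S$. $\mathrm{Args}(G)$ and $\mathrm{Att}(G)$ denote the set of arguments and the attack relation. Transformation 1: the Datalog program $P_T$ contains the fact $k.$ for every $k\in K_n\cup K_p$, and for every rule $r\in R_s\cup R_d$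 with body $b_1(\vec X_1),\dots,b_m(\vec X_m)$, head $h(\vec Y)$ and variable list $\vec X$ (all variables of $r$), with a fresh predicate $\mathrm{aux}_r$: the rules $\mathrm{aux}_r(\vec X)\leftarrow b_1(\vec X_1),\dots,b_m(\vec X_m)$ and $h(\vec Y)\leftarrow \mathrm{aux}_r(\vec X)$, and, if $r\in R_d$ with $\mathsf{n}(r)=\nu_r(\vec Z)$, additionally $\nu_r(\vec Z)\leftarrow\mathrm{aux}_r(\vec X)$. Let $M$ be the least Herbrand model of $P_T$. The grounding via Datalog $G_{DL}(T)$ has premises $K_n,K_p$, rules $\{r\sigma : r\in R_s\cup R_d,\ \mathrm{aux}_r(\vec X)\sigma\in M\}$ (strict/defeasible as $r$), and contrariness rules $\{c\sigma: c=(s(\vec X)\rightsquigarrow S(\vec X))\in C,\ s(\vec X)\sigma\in M\}$. Complete, grounded, preferred and stable extensions are those of Dung's abstract argumentation frameworks. *)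

theory Defs
  imports Main
begin

datatype ('c, 'v) trm = Cst 'c | Var 'v

type_synonym ('p, 'c, 'v) atom = "'p \<times> ('c, 'v) trm list"
type_synonym ('p, 'c) gatom = "'p \<times> 'c list"

fun trm_vars :: "('c, 'v) trm \<Rightarrow> 'v set" where
  "trm_vars (Cst c) = {}"
| "trm_vars (Var x) = {x}"

fun trm_consts :: "('c, 'v) trm \<Rightarrow> 'c set" where
  "trm_consts (Cst c) = {c}"
| "trm_consts (Var x) = {}"

definition atom_vars :: "('p, 'c, 'v) atom \<Rightarrow> 'v set" where
  "atom_vars a = (\<Union>t \<in> set (snd a). trm_vars t)"

definition atom_consts :: "('p, 'c, 'v) atom \<Rightarrow> 'c set" where
  "atom_consts a = (\<Union>t \<in> set (snd a). trm_consts t)"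

fun trm_inst :: "('v \<Rightarrow> 'c) \<Rightarrow> ('c, 'v) trm \<Rightarrow> 'c" where
  "trm_inst \<sigma> (Cst c) = c"
| "trm_inst \<sigma> (Var x) = \<sigma> x"

definition inst :: "('v \<Rightarrow> 'c) \<Rightarrow> ('p, 'c, 'v) atom \<Rightarrow> ('p, 'c) gatom" where
  "inst \<sigma> a = (fst a, map (trm_inst \<sigma>) (snd a))"

text \<open>A strict rule is a pair (body, head); a defeasible rule is a triple
 (body, head, name atom); a contrariness rule is a pair (s, S).\<close>

type_synonym ('p, 'c, 'v) srule = "('p, 'c, 'v) atom list \<times> ('p, 'c, 'v) atom"
type_synonym ('p, 'c, 'v) drule = "('p, 'c, 'v) atom list \<times> ('p, 'c, 'v) atom \<times> ('p, 'c, 'v) atom"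
type_synonym ('p, 'c, 'v) crule = "('p, 'c, 'v) atom \<times> ('p, 'c, 'v) atom set"

record ('p, 'c, 'v) arg_theory =
  Kn :: "('p, 'c) gatom set"
  Kp :: "('p, 'c) gatom set"
  Rs :: "('p, 'c, 'v) srule set"
  Rd :: "('p, 'c, 'v) drule set"
  Cr :: "('p, 'c, 'v) crule set"

definition srule_vars :: "('p, 'c, 'v) srule \<Rightarrow> 'v set" where
  "srule_vars r = (\<Union>a \<in> set (fst r). atom_vars a) \<union> atom_vars (snd r)"

definition drule_vars :: "('p, 'c, 'v) drule \<Rightarrow> 'v set" where
  "drule_vars r = (case r of (b, h, n) \<Rightarrow>
     (\<Union>a \<in> set b. atom_vars a) \<union> atom_vars h \<union> atom_vars n)"

definition crule_vars :: "('p, 'c, 'v) crule \<Rightarrow> 'v set" where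
  "crule_vars c = atom_vars (fst c) \<union> (\<Union>a \<in> snd c. atom_vars a)"

definition gatom_consts :: "('p, 'c) gatom \<Rightarrow> 'c set" where
  "gatom_consts a = set (snd a)"

definition wf_theory :: "('p, 'c, 'v) arg_theory \<Rightarrow> bool" where
  "wf_theory T \<longleftrightarrow>
     finite (Kn T) \<and> finite (Kp T) \<and> finite (Rs T) \<and> finite (Rd T) \<and> finite (Cr T) \<and>
     (\<forall>(b, h) \<in> Rs T. atom_vars h \<subseteq> (\<Union>a \<in> set b. atom_vars a)) \<and>
     (\<forall>(b, h, n) \<in> Rd T. atom_vars h \<subseteq> (\<Union>a \<in> set b. atom_vars a)
                        \<and> atom_vars n \<subseteq> (\<Union>a \<in> set b. atom_vars a)) \<and>
     (\<forall>(s, S) \<in> Cr T. finite S \<and> (\<forall>a \<in> S. atom_vars a \<subseteq> atom_vars s))"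

definition HU :: "('p, 'c, 'v) arg_theory \<Rightarrow> 'c set" where
  "HU T = (\<Union>a \<in> Kn T \<union> Kp T. gatom_consts a)
        \<union> (\<Union>(b, h) \<in> Rs T. (\<Union>a \<in> set b. atom_consts a) \<union> atom_consts h)
        \<union> (\<Union>(b, h, n) \<in> Rd T. (\<Union>a \<in> set b. atom_consts a) \<union> atom_consts h \<union> atom_consts n)
        \<union> (\<Union>(s, S) \<in> Cr T. atom_consts s \<union> (\<Union>a \<in> S. atom_consts a))"

definition ground_subst :: "'c set \<Rightarrow> 'v set \<Rightarrow> ('v \<Rightarrow> 'c) \<Rightarrow> bool" where
  "ground_subst U V \<sigma> \<longleftrightarrow> (\<forall>x \<in> V. \<sigma> x \<in> U)"

datatype ('p, 'c) grule =
    GS "('p, 'c) gatom list" "('p, 'c) gatom"                  \<comment> \<open>strict: body, head\<close>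
  | GD "('p, 'c) gatom list" "('p, 'c) gatom" "('p, 'c) gatom" \<comment> \<open>defeasible: body, head, name\<close>

fun gbody :: "('p, 'c) grule \<Rightarrow> ('p, 'c) gatom list" where
  "gbody (GS b h) = b"
| "gbody (GD b h n) = b"

fun ghead :: "('p, 'c) grule \<Rightarrow> ('p, 'c) gatom" where
  "ghead (GS b h) = h"
| "ghead (GD b h n) = h"

record ('p, 'c) gtheory =
  gKn :: "('p, 'c) gatom set"
  gKp :: "('p, 'c) gatom set"
  gR :: "('p, 'c) grule set"
  gC :: "(('p, 'c) gatom \<times> ('p, 'c) gatom set) set"

definition inst_s :: "('v \<Rightarrow> 'c) \<Rightarrow> ('p, 'c, 'v) srule \<Rightarrow> ('p, 'c) grule" where
  "inst_s \<sigma> r = GS (map (inst \<sigma>) (fst r)) (inst \<sigma> (snd r))"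

definition inst_d :: "('v \<Rightarrow> 'c) \<Rightarrow> ('p, 'c, 'v) drule \<Rightarrow> ('p, 'c) grule" where
  "inst_d \<sigma> r = (case r of (b, h, n) \<Rightarrow> GD (map (inst \<sigma>) b) (inst \<sigma> h) (inst \<sigma> n))"

definition inst_c :: "('v \<Rightarrow> 'c) \<Rightarrow> ('p, 'c, 'v) crule \<Rightarrow> ('p, 'c) gatom \<times> ('p, 'c) gatom set" where
  "inst_c \<sigma> c = (inst \<sigma> (fst c), inst \<sigma> ` snd c)"

definition full_grounding :: "('p, 'c, 'v) arg_theory \<Rightarrow> ('p, 'c) gtheory" where
  "full_grounding T =
     \<lparr> gKn = Kn T, gKp = Kp T,
       gR = {inst_s \<sigma> r | r \<sigma>. r \<in> Rs T \<and> ground_subst (HU T) (srule_vars r) \<sigma>}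
          \<union> {inst_d \<sigma> r | r \<sigma>. r \<in> Rd T \<and> ground_subst (HU T) (drule_vars r) \<sigma>},
       gC = {inst_c \<sigma> c | c \<sigma>. c \<in> Cr T \<and> ground_subst (HU T) (crule_vars c) \<sigma>} \<rparr>"

datatype ('p, 'c) argument =
    PremArg "('p, 'c) gatom"
  | RuleArg "('p, 'c) argument list" "('p, 'c) grule"

fun conc :: "('p, 'c) argument \<Rightarrow> ('p, 'c) gatom" where
  "conc (PremArg k) = k"
| "conc (RuleArg As r) = ghead r"

primrec Prem :: "('p, 'c) argument \<Rightarrow> ('p, 'c) gatom set" where
  "Prem (PremArg k) = {k}"
| "Prem (RuleArg As r) = \<Union> (set (map Prem As))"

primrec Rules :: "('p, 'c) argument \<Rightarrow> ('p, 'c) grule set" where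
  "Rules (PremArg k) = {}"
| "Rules (RuleArg As r) = {r} \<union> \<Union> (set (map Rules As))"

inductive_set Args :: "('p, 'c) gtheory \<Rightarrow> ('p, 'c) argument set" for G where
  prem: "k \<in> gKn G \<union> gKp G \<Longrightarrow> PremArg k \<in> Args G"
| rule: "r \<in> gR G \<Longrightarrow> (\<forall>A. A \<in> set As \<longrightarrow> A \<in> Args G) \<Longrightarrow> map conc As = gbody r
          \<Longrightarrow> RuleArg As r \<in> Args G"

definition wp :: "('p, 'c) gtheory \<Rightarrow> ('p, 'c) argument \<Rightarrow> ('p, 'c) gatom set" where
  "wp G A = (Prem A \<inter> gKp G) \<union> (\<Union>{{h, n} | b h n. GD b h n \<in> Rules A})"

definition attacks :: "('p, 'c) gtheory \<Rightarrow> ('p, 'c) argument \<Rightarrow> ('p, 'c) argument \<Rightarrow> bool" where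
  "attacks G A A' \<longleftrightarrow> (\<exists>(s, S) \<in> gC G. s \<in> wp G A' \<and> conc A \<in> S)"

definition Att :: "('p, 'c) gtheory \<Rightarrow> (('p, 'c) argument \<times> ('p, 'c) argument) set" where
  "Att G = {(A, A'). A \<in> Args G \<and> A' \<in> Args G \<and> attacks G A A'}"

definition conflict_free :: "'a set \<Rightarrow> ('a \<times> 'a) set \<Rightarrow> 'a set \<Rightarrow> bool" where
  "conflict_free Ar R E \<longleftrightarrow> E \<subseteq> Ar \<and> (\<forall>a \<in> E. \<forall>b \<in> E. (a, b) \<notin> R)"

definition defends :: "'a set \<Rightarrow> ('a \<times> 'a) set \<Rightarrow> 'a set \<Rightarrow> 'a \<Rightarrow> bool" where
  "defends Ar R E a \<longleftrightarrow> (\<forall>b \<in> Ar. (b, a) \<in> R \<longrightarrow> (\<exists>c \<in> E. (c, b) \<in> R))"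

definition admissible :: "'a set \<Rightarrow> ('a \<times> 'a) set \<Rightarrow> 'a set \<Rightarrow> bool" where
  "admissible Ar R E \<longleftrightarrow> conflict_free Ar R E \<and> (\<forall>a \<in> E. defends Ar R E a)"

definition complete_ext :: "'a set \<Rightarrow> ('a \<times> 'a) set \<Rightarrow> 'a set \<Rightarrow> bool" where
  "complete_ext Ar R E \<longleftrightarrow> admissible Ar R E \<and> (\<forall>a \<in> Ar. defends Ar R E a \<longrightarrow> a \<in> E)"

definition grounded_ext :: "'a set \<Rightarrow> ('a \<times> 'a) set \<Rightarrow> 'a set \<Rightarrow> bool" where
  "grounded_ext Ar R E \<longleftrightarrow> complete_ext Ar R E \<and> (\<forall>E'. complete_ext Ar R E' \<longrightarrow> E \<subseteq> E')"

definition preferred_ext :: "'a set \<Rightarrow> ('a \<times> 'a) set \<Rightarrow> 'a set \<Rightarrow> bool" where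
  "preferred_ext Ar R E \<longleftrightarrow> admissible Ar R E \<and> (\<forall>E'. admissible Ar R E' \<and> E \<subseteq> E' \<longrightarrow> E' = E)"

definition stable_ext :: "'a set \<Rightarrow> ('a \<times> 'a) set \<Rightarrow> 'a set \<Rightarrow> bool" where
  "stable_ext Ar R E \<longleftrightarrow> conflict_free Ar R E \<and> (\<forall>b \<in> Ar - E. \<exists>a \<in> E. (a, b) \<in> R)"

datatype semantics = Complete | Grounded | Preferred | Stable

fun extensions :: "semantics \<Rightarrow> 'a set \<Rightarrow> ('a \<times> 'a) set \<Rightarrow> 'a set set" where
  "extensions Complete Ar R = {E. complete_ext Ar R E}"
| "extensions Grounded Ar R = {E. grounded_ext Ar R E}"
| "extensions Preferred Ar R = {E. preferred_ext Ar R E}"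
| "extensions Stable Ar R = {E. stable_ext Ar R E}"

definition sem_ground :: "semantics \<Rightarrow> ('p, 'c) gtheory \<Rightarrow> ('p, 'c) argument set set" where
  "sem_ground s G = extensions s (Args G) (Att G)"

definition sem_theory :: "semantics \<Rightarrow> ('p, 'c, 'v) arg_theory \<Rightarrow> ('p, 'c) argument set set" where
  "sem_theory s T = sem_ground s (full_grounding T)"

record ('q, 'c, 'v) datalog =
  dl_facts :: "('q, 'c) gatom set"
  dl_rules :: "(('q, 'c, 'v) atom \<times> ('q, 'c, 'v) atom list) set"  \<comment> \<open>head, body\<close>

definition dl_rule_vars :: "('q, 'c, 'v) atom \<times> ('q, 'c, 'v) atom list \<Rightarrow> 'v set" where
  "dl_rule_vars r = atom_vars (fst r) \<union> (\<Union>a \<in> set (snd r). atom_vars a)"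

definition dl_HU :: "('q, 'c, 'v) datalog \<Rightarrow> 'c set" where
  "dl_HU P = (\<Union>a \<in> dl_facts P. gatom_consts a)
           \<union> (\<Union>r \<in> dl_rules P. atom_consts (fst r) \<union> (\<Union>a \<in> set (snd r). atom_consts a))"

definition dl_model :: "('q, 'c, 'v) datalog \<Rightarrow> ('q, 'c) gatom set \<Rightarrow> bool" where
  "dl_model P I \<longleftrightarrow> dl_facts P \<subseteq> I \<and>
     (\<forall>r \<in> dl_rules P. \<forall>\<sigma>. ground_subst (dl_HU P) (dl_rule_vars r) \<sigma> \<longrightarrow>
        (\<forall>a \<in> set (snd r). inst \<sigma> a \<in> I) \<longrightarrow> inst \<sigma> (fst r) \<in> I)"

definition least_model :: "('q, 'c, 'v) datalog \<Rightarrow> ('q, 'c) gatom set" where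
  "least_model P = \<Inter> {I. dl_model P I}"

text \<open>Predicates of P_T: original predicates (Inl) and fresh aux_r predicates (Inr r),
  one for each rule r of T (strict: Inl, defeasible: Inr).\<close>
type_synonym ('p, 'c, 'v) rid = "('p, 'c, 'v) srule + ('p, 'c, 'v) drule"
type_synonym ('p, 'c, 'v) dlpred = "'p + ('p, 'c, 'v) rid"

definition rid_vars :: "('p, 'c, 'v) rid \<Rightarrow> 'v set" where
  "rid_vars r = (case r of Inl s \<Rightarrow> srule_vars s | Inr d \<Rightarrow> drule_vars d)"

definition rid_varlist :: "('p, 'c, 'v) rid \<Rightarrow> 'v list" where
  "rid_varlist r = (SOME xs. distinct xs \<and> set xs = rid_vars r)"

definition lift :: "('p, 'c, 'v) atom \<Rightarrow> (('p, 'c, 'v) dlpred, 'c, 'v) atom" where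
  "lift a = (Inl (fst a), snd a)"

definition glift :: "('p, 'c) gatom \<Rightarrow> (('p, 'c, 'v) dlpred, 'c) gatom" where
  "glift a = (Inl (fst a), snd a)"

definition aux_atom :: "('p, 'c, 'v) rid \<Rightarrow> (('p, 'c, 'v) dlpred, 'c, 'v) atom" where
  "aux_atom r = (Inr r, map Var (rid_varlist r))"

definition P_T :: "('p, 'c, 'v) arg_theory \<Rightarrow> (('p, 'c, 'v) dlpred, 'c, 'v) datalog" where
  "P_T T =
     \<lparr> dl_facts = glift ` (Kn T \<union> Kp T),
       dl_rules =
         {(aux_atom (Inl r), map lift (fst r)) | r. r \<in> Rs T}
       \<union> {(lift (snd r), [aux_atom (Inl r)]) | r. r \<in> Rs T}
       \<union> {(aux_atom (Inr r), map lift b) | r b h n. r \<in> Rd T \<and> r = (b, h, n)}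
       \<union> {(lift h, [aux_atom (Inr r)]) | r b h n. r \<in> Rd T \<and> r = (b, h, n)}
       \<union> {(lift n, [aux_atom (Inr r)]) | r b h n. r \<in> Rd T \<and> r = (b, h, n)} \<rparr>"

definition dl_grounding :: "('p, 'c, 'v) arg_theory \<Rightarrow> ('p, 'c) gtheory" where
  "dl_grounding T =
     (let M = least_model (P_T T) in
     \<lparr> gKn = Kn T, gKp = Kp T,
       gR = {inst_s \<sigma> r | r \<sigma>. r \<in> Rs T \<and> ground_subst (HU T) (srule_vars r) \<sigma>
                               \<and> inst \<sigma> (aux_atom (Inl r)) \<in> M}
          \<union> {inst_d \<sigma> r | r \<sigma>. r \<in> Rd T \<and> ground_subst (HU T) (drule_vars r) \<sigma>
                               \<and> inst \<sigma> (aux_atom (Inr r)) \<in> M},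
       gC = {inst_c \<sigma> c | c \<sigma>. c \<in> Cr T \<and> ground_subst (HU T) (crule_vars c) \<sigma>
                               \<and> inst \<sigma> (lift (fst c)) \<in> M} \<rparr>)"

end

theory Submission
  imports Defs
begin

lemma dl_simps:
  "gKn (dl_grounding T) = Kn T" "gKp (dl_grounding T) = Kp T"
  "gR (dl_grounding T) = {inst_s \<sigma> r | r \<sigma>. r \<in> Rs T \<and> ground_subst (HU T) (srule_vars r) \<sigma>
                               \<and> inst \<sigma> (aux_atom (Inl r)) \<in> least_model (P_T T)}
          \<union> {inst_d \<sigma> r | r \<sigma>. r \<in> Rd T \<and> ground_subst (HU T) (drule_vars r) \<sigma>
                               \<and> inst \<sigma> (aux_atom (Inr r)) \<in> least_model (P_T T)}"
  "gC (dl_grounding T) = {inst_c \<sigma> c | c \<sigma>. c \<in> Cr T \<and> ground_subst (HU T) (crule_vars c) \<sigma>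
                               \<and> inst \<sigma> (lift (fst c)) \<in> least_model (P_T T)}"
  by (simp_all add: dl_grounding_def Let_def)

lemma full_simps:
  "gKn (full_grounding T) = Kn T" "gKp (full_grounding T) = Kp T"
  "gR (full_grounding T) = {inst_s \<sigma> r | r \<sigma>. r \<in> Rs T \<and> ground_subst (HU T) (srule_vars r) \<sigma>}
          \<union> {inst_d \<sigma> r | r \<sigma>. r \<in> Rd T \<and> ground_subst (HU T) (drule_vars r) \<sigma>}"
  "gC (full_grounding T) = {inst_c \<sigma> c | c \<sigma>. c \<in> Cr T \<and> ground_subst (HU T) (crule_vars c) \<sigma>}"
  by (simp_all add: full_grounding_def)

lemma least_model_is_model: "dl_model P (least_model P)"
  unfolding dl_model_def least_model_def by blast

lemma M_closed:
  assumes "r \<in> dl_rules P" "ground_subst (dl_HU P) (dl_rule_vars r) \<sigma>"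
    "\<forall>a \<in> set (snd r). inst \<sigma> a \<in> least_model P"
  shows "inst \<sigma> (fst r) \<in> least_model P"
  using least_model_is_model[of P] assms unfolding dl_model_def by blast

lemma M_facts: "a \<in> dl_facts P \<Longrightarrow> a \<in> least_model P"
  using least_model_is_model[of P] unfolding dl_model_def by blast

lemma trm_inst_in:
  assumes "t \<in> set ts" shows "trm_inst \<sigma> t \<in> set (map (trm_inst \<sigma>) ts)"
  using assms by auto

lemma M_consts:
  assumes "a \<in> least_model P" shows "set (snd a) \<subseteq> dl_HU P"
proof -
  let ?I = "{a. set (snd a) \<subseteq> dl_HU P}"
  have "dl_model P ?I"
    unfolding dl_model_def
  proof (intro conjI ballI allI impI)
    show "dl_facts P \<subseteq> ?I" unfolding dl_HU_def gatom_consts_def by blast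
  next
    fix r \<sigma> assume r: "r \<in> dl_rules P" and g: "ground_subst (dl_HU P) (dl_rule_vars r) \<sigma>"
    show "inst \<sigma> (fst r) \<in> ?I"
    proof (clarsimp simp: inst_def)
      fix t assume t: "t \<in> set (snd (fst r))"
      show "trm_inst \<sigma> t \<in> dl_HU P"
      proof (cases t)
        case (Cst c)
        then have "c \<in> atom_consts (fst r)" using t unfolding atom_consts_def by force
        then show ?thesis using Cst r unfolding dl_HU_def by auto
      next
        case (Var x)
        then have "x \<in> dl_rule_vars r" using t unfolding dl_rule_vars_def atom_vars_def by force
        then show ?thesis using Var g unfolding ground_subst_def by auto
      qed
    qed
  qed
  then have "least_model P \<subseteq> ?I" unfolding least_model_def by blast
  then show ?thesis using assms by blast
qed

lemma var_in_inst:
  assumes "x \<in> atom_vars a" shows "\<sigma> x \<in> set (snd (inst \<sigma> a))"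
proof -
  from assms obtain t where t: "t \<in> set (snd a)" "x \<in> trm_vars t" unfolding atom_vars_def by blast
  have "t = Var x" using t(2) by (cases t) auto
  then show ?thesis using t unfolding inst_def by force
qed

lemma inst_lift: "inst \<sigma> (lift a) = glift (inst \<sigma> a)"
  by (simp add: inst_def lift_def glift_def)

lemma atom_vars_lift[simp]: "atom_vars (lift a) = atom_vars a"
  by (simp add: atom_vars_def lift_def)

lemma finite_atom_vars: "finite (atom_vars a)"
proof -
  have "\<And>t. finite (trm_vars t)" by (case_tac t) auto
  then show ?thesis unfolding atom_vars_def by auto
qed

lemma finite_rid_vars: "finite (rid_vars r)"
  by (cases r) (auto simp: rid_vars_def srule_vars_def drule_vars_def finite_atom_vars split: prod.splits)

lemma atom_vars_aux: "atom_vars (aux_atom r) = rid_vars r"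
proof -
  have "\<exists>xs. distinct xs \<and> set xs = rid_vars r"
  proof -
    obtain xs where "set xs = rid_vars r" "distinct xs"
      using finite_distinct_list[OF finite_rid_vars[of r]] by (elim exE conjE)
    then show ?thesis by (intro exI[of _ xs] conjI)
  qed
  then have "set (rid_varlist r) = rid_vars r" unfolding rid_varlist_def
    by (metis (mono_tags, lifting) someI_ex)
  then show ?thesis unfolding atom_vars_def aux_atom_def by auto
qed

lemma body_vars_ground:
  fixes P :: "(('p, 'c, 'v) dlpred, 'c, 'v) datalog" and \<sigma> :: "'v \<Rightarrow> 'c"
    and b :: "('p, 'c, 'v) atom list"
  assumes "\<forall>a \<in> set b. glift (inst \<sigma> a) \<in> least_model P"
    and "x \<in> (\<Union>a \<in> set b. atom_vars a)"
  shows "\<sigma> x \<in> dl_HU P"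
proof -
  from assms(2) obtain a where a: "a \<in> set b" "x \<in> atom_vars a" by blast
  have "\<sigma> x \<in> set (snd (inst \<sigma> a))" using var_in_inst[OF a(2)] .
  also have "\<dots> = set (snd (glift (inst \<sigma> a) :: (('p, 'c, 'v) dlpred, 'c) gatom))"
    by (simp add: glift_def)
  finally show ?thesis using M_consts assms(1) a(1) by blast
qed

lemma PT_rules:
  "r \<in> Rs T \<Longrightarrow> (aux_atom (Inl r), map lift (fst r)) \<in> dl_rules (P_T T)"
  "r \<in> Rs T \<Longrightarrow> (lift (snd r), [aux_atom (Inl r)]) \<in> dl_rules (P_T T)"
  "(b, h, n) \<in> Rd T \<Longrightarrow> (aux_atom (Inr (b, h, n)), map lift b) \<in> dl_rules (P_T T)"
  "(b, h, n) \<in> Rd T \<Longrightarrow> (lift h, [aux_atom (Inr (b, h, n))]) \<in> dl_rules (P_T T)"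
  "(b, h, n) \<in> Rd T \<Longrightarrow> (lift n, [aux_atom (Inr (b, h, n))]) \<in> dl_rules (P_T T)"
  unfolding P_T_def datalog.simps by blast+

lemma vars_rules:
  "dl_rule_vars (aux_atom (Inl r), map lift (fst r)) \<subseteq> srule_vars r"
  "dl_rule_vars (lift (snd r), [aux_atom (Inl r)]) \<subseteq> srule_vars r"
  "dl_rule_vars (aux_atom (Inr (b, h, n)), map lift b) \<subseteq> drule_vars (b, h, n)"
  "dl_rule_vars (lift h, [aux_atom (Inr (b, h, n))]) \<subseteq> drule_vars (b, h, n)"
  "dl_rule_vars (lift n, [aux_atom (Inr (b, h, n))]) \<subseteq> drule_vars (b, h, n)"
  by (auto simp: dl_rule_vars_def atom_vars_aux rid_vars_def srule_vars_def drule_vars_def)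

lemma M_closed':
  assumes "r \<in> dl_rules P" "dl_rule_vars r \<subseteq> V" "\<And>x. x \<in> V \<Longrightarrow> \<sigma> x \<in> dl_HU P"
    "\<forall>a \<in> set (snd r). inst \<sigma> a \<in> least_model P"
  shows "inst \<sigma> (fst r) \<in> least_model P"
  using M_closed[OF assms(1) _ assms(4)] assms(2,3) unfolding ground_subst_def by blast

definition inM :: "('p, 'c, 'v) arg_theory \<Rightarrow> ('p, 'c) gatom \<Rightarrow> bool" where
  "inM T a \<longleftrightarrow> (glift a :: (('p, 'c, 'v) dlpred, 'c) gatom) \<in> least_model (P_T T)"

lemma main:
  assumes wf: "wf_theory T" and A: "A \<in> Args (full_grounding T)"
  shows "A \<in> Args (dl_grounding T) \<and> inM T (conc A)
         \<and> (\<forall>b h n. GD b h n \<in> Rules A \<longrightarrow> inM T h \<and> inM T n)"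
  using A
proof (induction A rule: Args.induct)
  case (prem k)
  then have "glift k \<in> dl_facts (P_T T)" by (auto simp: P_T_def full_simps)
  then show ?case using prem by (auto simp: inM_def full_simps dl_simps intro: M_facts Args.prem)
next
  case (rule r As)
  let ?M = "least_model (P_T T)"
  have IH: "\<forall>A \<in> set As. A \<in> Args (dl_grounding T) \<and> inM T (conc A)
         \<and> (\<forall>b h n. GD b h n \<in> Rules A \<longrightarrow> inM T h \<and> inM T n)" using rule by blast
  have bodyM: "\<forall>a \<in> set (gbody r). inM T a"
    using IH rule by (metis (no_types, lifting) imageE list.set_map)
  from rule.hyps(1) show ?case unfolding full_simps
  proof (elim UnE CollectE exE conjE)
    fix r0 \<sigma> assume r: "r = inst_s \<sigma> r0" and r0: "r0 \<in> Rs T"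
      and gs: "ground_subst (HU T) (srule_vars r0) \<sigma>"
    have b: "\<forall>a \<in> set (fst r0). inst \<sigma> (lift a) \<in> ?M"
      using bodyM r by (auto simp: inst_s_def inst_lift inM_def)
    have hv: "atom_vars (snd r0) \<subseteq> (\<Union>a \<in> set (fst r0). atom_vars a)"
    proof -
      have W: "\<forall>(b, h) \<in> Rs T. atom_vars h \<subseteq> (\<Union>a \<in> set b. atom_vars a)"
        using wf unfolding wf_theory_def by (elim conjE)
      have "case r0 of (b, h) \<Rightarrow> atom_vars h \<subseteq> (\<Union>a \<in> set b. atom_vars a)"
        using W r0 by (rule bspec)
      then show ?thesis by (cases r0) simp
    qed
    have bg: "\<forall>a \<in> set (fst r0). glift (inst \<sigma> a) \<in> ?M" using b by (simp add: inst_lift)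
    have gv: "\<And>x. x \<in> srule_vars r0 \<Longrightarrow> \<sigma> x \<in> dl_HU (P_T T)"
      using body_vars_ground[OF bg] hv unfolding srule_vars_def by blast
    have aux: "inst \<sigma> (aux_atom (Inl r0)) \<in> ?M"
      using M_closed'[OF PT_rules(1)[OF r0] vars_rules(1) gv] b by simp
    have hd: "inst \<sigma> (lift (snd r0)) \<in> ?M"
      using M_closed'[OF PT_rules(2)[OF r0] vars_rules(2) gv] aux by simp
    have "r \<in> gR (dl_grounding T)" unfolding dl_simps using r r0 gs aux by blast
    then have "RuleArg As r \<in> Args (dl_grounding T)"
      using IH rule by (auto intro: Args.rule)
    moreover have "inM T (conc (RuleArg As r))" using hd r
      by (simp add: inM_def inst_s_def inst_lift)
    moreover have "\<forall>b h n. GD b h n \<in> Rules (RuleArg As r) \<longrightarrow> inM T h \<and> inM T n"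
      using IH r by (auto simp: inst_s_def)
    ultimately show ?case by blast
  next
    fix r0 \<sigma> assume r: "r = inst_d \<sigma> r0" and r0: "r0 \<in> Rd T"
      and gs: "ground_subst (HU T) (drule_vars r0) \<sigma>"
    obtain b0 h0 n0 where r0e: "r0 = (b0, h0, n0)" by (cases r0) auto
    have b: "\<forall>a \<in> set b0. inst \<sigma> (lift a) \<in> ?M"
      using bodyM r r0e by (auto simp: inst_d_def inst_lift inM_def)
    have hv: "atom_vars h0 \<subseteq> (\<Union>a \<in> set b0. atom_vars a)"
      "atom_vars n0 \<subseteq> (\<Union>a \<in> set b0. atom_vars a)"
    proof -
      have W: "\<forall>(b, h, n) \<in> Rd T. atom_vars h \<subseteq> (\<Union>a \<in> set b. atom_vars a)
                        \<and> atom_vars n \<subseteq> (\<Union>a \<in> set b. atom_vars a)"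
        using wf unfolding wf_theory_def by (elim conjE)
      have "case r0 of (b, h, n) \<Rightarrow> atom_vars h \<subseteq> (\<Union>a \<in> set b. atom_vars a)
                        \<and> atom_vars n \<subseteq> (\<Union>a \<in> set b. atom_vars a)"
        using W r0 by (rule bspec)
      then show "atom_vars h0 \<subseteq> (\<Union>a \<in> set b0. atom_vars a)"
        "atom_vars n0 \<subseteq> (\<Union>a \<in> set b0. atom_vars a)" using r0e by simp_all
    qed
    have bg: "\<forall>a \<in> set b0. glift (inst \<sigma> a) \<in> ?M" using b by (simp add: inst_lift)
    have gv: "\<And>x. x \<in> drule_vars r0 \<Longrightarrow> \<sigma> x \<in> dl_HU (P_T T)"
      using body_vars_ground[OF bg] hv unfolding drule_vars_def r0e by (simp; blast)
    have r0': "(b0, h0, n0) \<in> Rd T" using r0 r0e by simp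
    have gv': "\<And>x. x \<in> drule_vars (b0, h0, n0) \<Longrightarrow> \<sigma> x \<in> dl_HU (P_T T)"
      using gv r0e by simp
    have aux: "inst \<sigma> (aux_atom (Inr r0)) \<in> ?M"
      using M_closed'[OF PT_rules(3)[OF r0'] vars_rules(3) gv'] b r0e by simp
    have hd: "inst \<sigma> (lift h0) \<in> ?M"
      using M_closed'[OF PT_rules(4)[OF r0'] vars_rules(4) gv'] aux r0e by simp
    have nm: "inst \<sigma> (lift n0) \<in> ?M"
      using M_closed'[OF PT_rules(5)[OF r0'] vars_rules(5) gv'] aux r0e by simp
    have "r \<in> gR (dl_grounding T)" unfolding dl_simps using r r0 gs aux by blast
    then have "RuleArg As r \<in> Args (dl_grounding T)"
      using IH rule by (auto intro: Args.rule)
    moreover have "inM T (conc (RuleArg As r))" using hd r r0e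
      by (simp add: inM_def inst_d_def inst_lift)
    moreover have "\<forall>b h n. GD b h n \<in> Rules (RuleArg As r) \<longrightarrow> inM T h \<and> inM T n"
      using IH r r0e hd nm by (auto simp: inst_d_def inM_def inst_lift)
    ultimately show ?case by blast
  qed
qed

lemma dl_sub:
  assumes "A \<in> Args (dl_grounding T)" shows "A \<in> Args (full_grounding T)"
  using assms
proof (induction A rule: Args.induct)
  case (prem k) then show ?case by (auto simp: dl_simps full_simps intro: Args.prem)
next
  case (rule r As)
  have "r \<in> gR (full_grounding T)" using rule.hyps(1) by (auto simp: dl_simps full_simps)
  then show ?case using rule by (auto intro: Args.rule)
qed

lemma Args_eq: "wf_theory T \<Longrightarrow> Args (dl_grounding T) = Args (full_grounding T)"
  using main dl_sub by blast

lemma Att_eq: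
  assumes wf: "wf_theory T" shows "Att (dl_grounding T) = Att (full_grounding T)"
proof -
  have gC_sub: "gC (dl_grounding T) \<subseteq> gC (full_grounding T)"
    by (auto simp: dl_simps full_simps)
  have "attacks (dl_grounding T) A A' = attacks (full_grounding T) A A'"
    if A': "A' \<in> Args (full_grounding T)" for A A'
  proof
    assume "attacks (dl_grounding T) A A'"
    then show "attacks (full_grounding T) A A'"
      unfolding attacks_def wp_def dl_simps(2) full_simps(2)
      using gC_sub by blast
  next
    assume "attacks (full_grounding T) A A'"
    then obtain s S where sS: "(s, S) \<in> gC (full_grounding T)" "s \<in> wp (full_grounding T) A'"
      "conc A \<in> S" unfolding attacks_def by blast
    have sM: "inM T s"
    proof -
      from sS(2) consider "s \<in> Prem A' \<inter> Kp T" | b h n where "GD b h n \<in> Rules A'" "s = h \<or> s = n"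
        unfolding wp_def full_simps by blast
      then show ?thesis
      proof cases
        case 1
        then have "glift s \<in> dl_facts (P_T T)" by (auto simp: P_T_def)
        then show ?thesis by (simp add: inM_def M_facts)
      next
        case 2 then show ?thesis using main[OF wf A'] by blast
      qed
    qed
    from sS(1) obtain c \<sigma> where c: "(s, S) = inst_c \<sigma> c" "c \<in> Cr T"
      "ground_subst (HU T) (crule_vars c) \<sigma>" by (auto simp: full_simps)
    have "inst \<sigma> (lift (fst c)) \<in> least_model (P_T T)"
      using sM c(1) by (simp add: inM_def inst_lift inst_c_def)
    then have "(s, S) \<in> gC (dl_grounding T)" unfolding dl_simps using c by blast
    then show "attacks (dl_grounding T) A A'" using sS unfolding attacks_def wp_def
      dl_simps(2) full_simps(2) by blast
  qed
  then show ?thesis unfolding Att_def using Args_eq[OF wf] by auto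
qed

theorem theorem1:
  fixes T :: "('p, 'c, 'v) arg_theory"
  assumes "wf_theory T"
  shows "\<forall>s \<in> {Complete, Grounded, Preferred, Stable}.
           sem_theory s T = sem_ground s (full_grounding T)
         \<and> sem_ground s (full_grounding T) = sem_ground s (dl_grounding T)"
  using Args_eq[OF assms] Att_eq[OF assms]
  by (simp add: sem_theory_def sem_ground_def)

end
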